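(* Let $n\ge 1$, let $M_n=\{1,\dots,n\}$, and let $\mathcal{F}\subset 2^{M_n}$ be a union-closed family (i.e. $A\cup B\in\mathcal{F}$ whenever $A,B\in\mathcal{F}$) with $\bigcup_{A\in\mathcal{F}}A=M_n$. Then for any $A\in\mathcal{F}$ with $|A|\ge 2$, there exists $y\in A$ such that $$|\{F\in\mathcal{F}: y\in F\}|\ge \frac{1}{2^{|A|-2}+1}|\mathcal{F}|.$$
   Context: $|X|$ denotes the cardinality of a set $X$; $2^{M_n}$ is the power set of $M_n$. *)

theory Defs
  imports Complex_Main
begin

definition union_closed :: "'a set set \<Rightarrow> bool" where
  "union_closed \<F> \<longleftrightarrow> (\<forall>A\<in>\<F>. \<forall>B\<in>\<F>. A \<union> B \<in> \<F>)"

end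

theory Submission
  imports Defs
begin

lemma main_nat:
  fixes \<F> :: "nat set set" and A :: "nat set"
  assumes fin: "finite \<F>" and uc: "union_closed \<F>" and AF: "A \<in> \<F>" and finA: "finite A"
    and y: "y \<in> A" and z: "z \<in> A" and yz: "y \<noteq> z"
  shows "card \<F> + card {G\<in>\<F>. A \<subseteq> G} \<le> 2 ^ (card A - 2) * card {G\<in>\<F>. A \<subseteq> G}
          + card {F\<in>\<F>. y \<in> F} + card {F\<in>\<F>. z \<in> F}"
proof -
  let ?D = "{F\<in>\<F>. y \<notin> F \<and> z \<notin> F}"
  let ?Y = "{F\<in>\<F>. y \<in> F}"
  let ?Z = "{F\<in>\<F>. z \<in> F}"
  let ?N = "{G\<in>\<F>. A \<subseteq> G}"
  have inj: "inj_on (\<lambda>F. (F \<union> A, F \<inter> A)) ?D"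
  proof (rule inj_onI)
    fix F G assume "(F \<union> A, F \<inter> A) = (G \<union> A, G \<inter> A)"
    then have "F \<union> A = G \<union> A" "F \<inter> A = G \<inter> A" by auto
    then show "F = G" by blast
  qed
  have img: "(\<lambda>F. (F \<union> A, F \<inter> A)) ` ?D \<subseteq> ?N \<times> Pow (A - {y, z})"
    using uc AF unfolding union_closed_def by auto
  have "card ?D \<le> card (?N \<times> Pow (A - {y, z}))"
    by (rule card_inj_on_le[OF inj img]) (use fin finA in auto)
  also have "\<dots> = card ?N * 2 ^ (card A - 2)"
    using fin finA y z yz by (simp add: card_cartesian_product card_Pow card_Diff_subset numeral_2_eq_2)
  finally have D: "card ?D \<le> 2 ^ (card A - 2) * card ?N" by (simp add: mult.commute)
  have split: "\<F> = ?D \<union> (?Y \<union> ?Z)" by auto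
  have "card \<F> \<le> card ?D + card (?Y \<union> ?Z)"
    by (subst split) (rule card_Un_le)
  moreover have "card (?Y \<union> ?Z) + card (?Y \<inter> ?Z) = card ?Y + card ?Z"
    using card_Un_Int[of ?Y ?Z] fin by auto
  moreover have "card ?N \<le> card (?Y \<inter> ?Z)"
    by (rule card_mono) (use fin y z in auto)
  ultimately show ?thesis using D by linarith
qed

theorem proposition3p4:
  fixes n :: nat and \<F> :: "nat set set" and A :: "nat set"
  assumes "n \<ge> 1"
    and "\<F> \<subseteq> Pow {1..n}"
    and "union_closed \<F>"
    and "\<Union>\<F> = {1..n}"
    and "A \<in> \<F>"
    and "card A \<ge> 2"
  shows "\<exists>y\<in>A. real (card {F\<in>\<F>. y \<in> F}) \<ge> (1 / (2 ^ (card A - 2) + 1)) * real (card \<F>)"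
proof -
  have fin: "finite \<F>" using assms(2) finite_subset by (metis finite_Pow_iff finite_atLeastAtMost)
  have finA: "finite A" using assms(2,5) finite_subset by blast
  have "A \<noteq> {}" using assms(6) by auto
  then obtain y where y: "y \<in> A" by blast
  have "card (A - {y}) \<ge> 1" using assms(6) y finA by simp
  then obtain z where z: "z \<in> A - {y}" by (metis card.empty ex_in_conv not_one_le_zero)
  let ?N = "card {G\<in>\<F>. A \<subseteq> G}"
  let ?k = "2 ^ (card A - 2) :: nat"
  have M: "card \<F> + ?N \<le> ?k * ?N + card {F\<in>\<F>. y \<in> F} + card {F\<in>\<F>. z \<in> F}"
    using main_nat[OF fin assms(3,5) finA y, of z] z by auto
  obtain w where w: "w \<in> A" and m: "card {F\<in>\<F>. y \<in> F} \<le> card {F\<in>\<F>. w \<in> F}"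
      "card {F\<in>\<F>. z \<in> F} \<le> card {F\<in>\<F>. w \<in> F}"
    using y z by (cases "card {F\<in>\<F>. y \<in> F} \<le> card {F\<in>\<F>. z \<in> F}") auto
  let ?m = "card {F\<in>\<F>. w \<in> F}"
  have Nm: "?N \<le> ?m" by (rule card_mono) (use fin w in auto)
  have k1: "?k \<ge> 1" by simp
  obtain d where d: "?m = ?N + d" using Nm le_Suc_ex by blast
  have "d \<le> ?k * d" using k1 by simp
  moreover have "?k * ?m = ?k * ?N + ?k * d" by (simp add: d algebra_simps)
  ultimately have "card \<F> \<le> ?k * ?m + ?m" using M m d by linarith
  also have "\<dots> = (?k + 1) * ?m" by (simp add: algebra_simps)
  finally have "real (card \<F>) \<le> (real ?k + 1) * real ?m"
    by (metis of_nat_1 of_nat_add of_nat_le_iff of_nat_mult)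
  then have "(1 / (real ?k + 1)) * real (card \<F>) \<le> real ?m"
    by (simp add: pos_divide_le_eq add_pos_pos algebra_simps)
  then show ?thesis using w by (intro bexI[of _ w]) auto
qed

end
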